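(* Let $L>0$, $g>0$, $\alpha^2>0$ and let $\mathbf G(x,y)=\frac{1}{4\pi}\log\left(\frac{\cos(x/L)-\cosh(y/L)}{\cos(x/L)-\cosh((y-2)/L)}\right)$ on $\mathbb{R}\times(-\infty,1)$. Let $c_1$ be the first component of $\nabla^\perp\bigl(\mathbf G-\Gamma\bigr)(0,0)$, and let \[ \eta_*=-(g-\alpha^2\partial_x^2)^{-1}\left(\chi-\frac{1}{2\pi L}\int_{-\pi L}^{\pi L}\chi\,dx\right),\qquad\chi(x)=c_1\mathbf G_y(x,1)+\tfrac12\mathbf G_y(x,1)^2. \] Then \[ c_1=-\frac{1}{4\pi L}\coth(1/L),\qquad \eta_*(x)=-\frac{1}{4\pi^2}\sum_{n=1}^\infty\frac{n}{gL^2+\alpha^2n^2}e^{-n/L}\cos(nx/L). \]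
   Context: $\Gamma(x,y)=\frac{1}{4\pi}\log(x^2+y^2)$ and $\nabla^\perp f=(-f_y,f_x)$; $\mathbf G-\Gamma$ extends harmonically to $(0,0)$. $(g-\alpha^2\partial_x^2)^{-1}$ acts on $2\pi L$-periodic mean-zero functions as the Fourier multiplier sending $\cos(nx/L)$ to $(g+\alpha^2n^2/L^2)^{-1}\cos(nx/L)$. Here $c_1$ and $\eta_*$ are the leading-order wave speed and surface profile of the small-amplitude $2\pi L$-periodic gravity-capillary waves on infinite depth with a point vortex at $(0,0)$ below the undisturbed surface $y=1$. *)

theory Defs
  imports "HOL-Analysis.Analysis"
begin

definition Gfun :: "real \<Rightarrow> real \<Rightarrow> real \<Rightarrow> real" where
  "Gfun L x y = 1 / (4 * pi) *
     ln ((cos (x / L) - cosh (y / L)) / (cos (x / L) - cosh ((y - 2) / L)))"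

definition Gamma_fun :: "real \<Rightarrow> real \<Rightarrow> real" where
  "Gamma_fun x y = 1 / (4 * pi) * ln (x\<^sup>2 + y\<^sup>2)"

definition is_regular_part :: "real \<Rightarrow> (real \<times> real \<Rightarrow> real) \<Rightarrow> bool" where
  "is_regular_part L H \<longleftrightarrow>
     H differentiable (at (0, 0)) \<and>
     (\<exists>e>0. \<forall>p. 0 < norm p \<and> norm p < e \<longrightarrow>
        H p = Gfun L (fst p) (snd p) - Gamma_fun (fst p) (snd p))"

text \<open>First component of the perpendicular gradient (-f_y, f_x) at (0,0).\<close>
definition perp_grad_first :: "(real \<times> real \<Rightarrow> real) \<Rightarrow> real" where
  "perp_grad_first H = - deriv (\<lambda>y. H (0, y)) 0"

definition Gy1 :: "real \<Rightarrow> real \<Rightarrow> real" where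
  "Gy1 L x = deriv (\<lambda>y. Gfun L x y) 1"

definition cos_coeff :: "real \<Rightarrow> (real \<Rightarrow> real) \<Rightarrow> nat \<Rightarrow> real" where
  "cos_coeff L f n = 1 / (pi * L) * integral {-pi*L..pi*L} (\<lambda>x. f x * cos (real n * x / L))"

definition sin_coeff :: "real \<Rightarrow> (real \<Rightarrow> real) \<Rightarrow> nat \<Rightarrow> real" where
  "sin_coeff L f n = 1 / (pi * L) * integral {-pi*L..pi*L} (\<lambda>x. f x * sin (real n * x / L))"

text \<open>(g - alpha^2 d_x^2)^{-1} on 2 pi L-periodic mean-zero functions, as the Fourier
  multiplier sending cos(nx/L) (and sin(nx/L)) to (g+alpha^2 n^2/L^2)^{-1} times itself.\<close>
definition inv_op :: "real \<Rightarrow> real \<Rightarrow> real \<Rightarrow> (real \<Rightarrow> real) \<Rightarrow> real \<Rightarrow> real" where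
  "inv_op L g \<alpha> f x =
     (\<Sum>n. if n = 0 then 0 else
        (cos_coeff L f n * cos (real n * x / L) + sin_coeff L f n * sin (real n * x / L))
        / (g + \<alpha>\<^sup>2 * (real n)\<^sup>2 / L\<^sup>2))"

definition chi_fun :: "real \<Rightarrow> real \<Rightarrow> real \<Rightarrow> real" where
  "chi_fun L c x = c * Gy1 L x + 1/2 * (Gy1 L x)\<^sup>2"

definition eta_star :: "real \<Rightarrow> real \<Rightarrow> real \<Rightarrow> real \<Rightarrow> real \<Rightarrow> real" where
  "eta_star L g \<alpha> c x =
     - inv_op L g \<alpha>
         (\<lambda>t. chi_fun L c t - 1 / (2 * pi * L) * integral {-pi*L..pi*L} (chi_fun L c)) x"

end

theory Submission
  imports Defs "HOL-Complex_Analysis.Complex_Analysis"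
begin

lemma re_alg:
  fixes r c s :: real
  assumes r: "0 < r" "r < 1" and cs: "s^2 + c^2 = 1" and c1: "c \<le> 1"
  shows "Re (Complex (r * c) (r * s) / (1 - Complex (r * c) (r * s))^2)
        = (((1/r + r)/2) * c - 1) / (2 * ((1/r + r)/2 - c)^2)"
proof -
  have s2: "s^2 = 1 - c^2" using cs by simp
  have q: "(1/r + r)/2 > 1"
  proof -
    have "(1 - r)^2 > 0" using r by simp
    hence "1 + r^2 > 2*r" by (simp add: power2_eq_square algebra_simps)
    thus ?thesis using r by (simp add: field_simps power2_eq_square)
  qed
  have D: "(1 - r * c)^2 + (r * s)^2 = r * (2 * ((1/r + r)/2 - c))"
    using s2 r by (simp add: power2_eq_square field_simps) algebra
  have Dp: "(1/r + r)/2 - c > 0" using q c1 by simp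
  define y where "y = (1 - Complex (r * c) (r * s))^2"
  have ny: "(Re y)^2 + (Im y)^2 = (r * (2 * ((1/r + r)/2 - c)))^2"
  proof -
    have "Re y = (1 - r * c)^2 - (r * s)^2" "Im y = -2 * (1 - r * c)*(r * s)"
      unfolding y_def by (simp_all add: power2_eq_square algebra_simps)
    hence "(Re y)^2 + (Im y)^2 = ((1 - r * c)^2 - (r * s)^2)^2 + (-2 * (1 - r * c) * (r * s))^2"
      by (simp only:)
    also have "... = ((1 - r * c)^2 + (r * s)^2)^2" by algebra
    finally have "(Re y)^2 + (Im y)^2 = ((1 - r * c)^2 + (r * s)^2)^2" .
    thus ?thesis using D by simp
  qed
  have ey: "Re y = (1 - r * c)^2 - (r * s)^2" "Im y = -2 * (1 - r * c) * (r * s)"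
    unfolding y_def by (simp_all add: power2_eq_square algebra_simps)
  have "Re (Complex (r * c) (r * s) / y) = (r * c * Re y + r * s * Im y) / ((Re y)^2 + (Im y)^2)"
    by (simp add: Re_divide power2_eq_square)
  also have "... = (r * c * ((1 - r * c)^2 - (r * s)^2) + r * s * (-2 * (1 - r * c) * (r * s))) / (r * (2 * ((1/r + r)/2 - c)))^2"
    by (subst ny) (simp only: ey)
  also have "... = (((1/r + r)/2) * c - 1) / (2 * ((1/r + r)/2 - c)^2)"
  proof -
    define k where "k = (1/r + r)/2"
    have hk: "2 * r * k = 1 + r^2" using r unfolding k_def by (simp add: field_simps power2_eq_square)
    have kc: "k - c \<noteq> 0" using Dp unfolding k_def by simp
    have num: "r * c * ((1 - r * c)^2 - (r * s)^2) + r * s * (-2 * (1 - r * c) * (r * s)) = 2 * r^2 * (k * c - 1)"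
      using hk s2 by algebra
    have den: "(r * (2 * (k - c)))^2 = (2*r^2) * (2*(k-c)^2)" by algebra
    show ?thesis unfolding k_def[symmetric] num den using r
      by (subst mult_divide_mult_cancel_left) auto
  qed
  finally show ?thesis unfolding y_def .
qed
lemma rcis_Complex: "rcis r t = Complex (r * cos t) (r * sin t)"
  by (simp add: complex_eq_iff)

lemma kernel_sums:
  fixes a t :: real
  assumes a: "a > 0"
  shows "(\<lambda>n. real n * exp (-a) ^ n * cos (real n * t)) sums
           ((cosh a * cos t - 1) / (2 * (cosh a - cos t)^2))"
proof -
  define r where "r = exp (-a)"
  have r: "0 < r" "r < 1" using a unfolding r_def by auto
  define w where "w = rcis r t"
  have nw: "norm w < 1" using r unfolding w_def by simp
  have "(\<lambda>n. w * (of_nat (Suc n) * w ^ n)) sums (w * (1 / (1 - w)^2))"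
    by (rule sums_mult[OF geometric_deriv_sums[OF nw]])
  hence "(\<lambda>n. (\<lambda>n. of_nat n * w ^ n) (Suc n)) sums (w / (1 - w)^2)"
    by (simp add: algebra_simps)
  hence "(\<lambda>n. of_nat n * w ^ n) sums (w / (1 - w)^2 + of_nat 0 * w ^ 0)"
    by (rule sums_Suc_iff[THEN iffD1])
  hence "(\<lambda>n. of_nat n * w ^ n) sums (w / (1 - w)^2)" by simp
  hence "(\<lambda>n. Re (of_nat n * w ^ n)) sums Re (w / (1 - w)^2)"
    by (simp add: sums_complex_iff)
  moreover have "(\<lambda>n. Re (of_nat n * w ^ n)) = (\<lambda>n. real n * r ^ n * cos (real n * t))"
    unfolding w_def DeMoivre2 by (simp add: fun_eq_iff)
  moreover have "Re (w / (1 - w)^2) = (cosh a * cos t - 1) / (2 * (cosh a - cos t)^2)"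
  proof -
    have ch: "cosh a = (1/r + r)/2" unfolding r_def cosh_def by (simp add: exp_minus field_simps)
    show ?thesis unfolding w_def rcis_Complex ch
      by (rule re_alg[OF r]) auto
  qed
  ultimately show ?thesis unfolding r_def by metis
qed



lemma int_cos_int:
  fixes L :: real and k :: int
  assumes L: "L > 0"
  shows "((\<lambda>x. cos (of_int k * x / L)) has_integral (if k = 0 then 2 * pi * L else 0)) {-pi*L..pi*L}"
proof (cases "k = 0")
  case True
  have "((\<lambda>x. 1::real) has_integral (pi*L - (-pi*L))) {-pi*L..pi*L}"
    using has_integral_const_real[of "1::real" "-pi*L" "pi*L"] L by simp
  then show ?thesis using True by (simp add: mult_ac)
next
  case False
  let ?F = "\<lambda>x. L / of_int k * sin (of_int k * x / L)"
  have "((\<lambda>x. cos (of_int k * x / L)) has_integral (?F (pi*L) - ?F (-pi*L))) {-pi*L..pi*L}"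
  proof (rule fundamental_theorem_of_calculus)
    show "-pi*L \<le> pi*L" using L by simp
    fix x assume "x \<in> {-pi*L..pi*L}"
    show "(?F has_vector_derivative cos (of_int k * x / L)) (at x within {-pi*L..pi*L})"
      unfolding has_real_derivative_iff_has_vector_derivative[symmetric]
      using L False by (auto intro!: derivative_eq_intros simp: field_simps)
  qed
  moreover have "?F (pi*L) - ?F (-pi*L) = 0"
  proof -
    have "sin (of_int k * (pi*L) / L) = 0" "sin (of_int k * (-pi*L) / L) = 0"
      using L by (simp_all add: mult.commute[of _ pi])
    thus ?thesis by simp
  qed
  ultimately show ?thesis using False L by simp
qed

lemma int_sin_int:
  fixes L :: real and k :: int
  assumes L: "L > 0"
  shows "((\<lambda>x. sin (of_int k * x / L)) has_integral 0) {-pi*L..pi*L}"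
proof (cases "k = 0")
  case True
  then show ?thesis by simp
next
  case False
  let ?F = "\<lambda>x. - L / of_int k * cos (of_int k * x / L)"
  have "((\<lambda>x. sin (of_int k * x / L)) has_integral (?F (pi*L) - ?F (-pi*L))) {-pi*L..pi*L}"
  proof (rule fundamental_theorem_of_calculus)
    show "-pi*L \<le> pi*L" using L by simp
    fix x assume "x \<in> {-pi*L..pi*L}"
    show "(?F has_vector_derivative sin (of_int k * x / L)) (at x within {-pi*L..pi*L})"
      unfolding has_real_derivative_iff_has_vector_derivative[symmetric]
      using L False by (auto intro!: derivative_eq_intros simp: field_simps)
  qed
  moreover have "?F (pi*L) - ?F (-pi*L) = 0"
  proof -
    have "cos (of_int k * (-pi*L) / L) = cos (of_int k * (pi*L) / L)"
    proof -
      have "of_int k * (-pi*L) / L = - (of_int k * (pi*L) / L)" by simp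
      thus ?thesis by (simp only: cos_minus)
    qed
    thus ?thesis by simp
  qed
  ultimately show ?thesis by simp
qed

lemma int_cos_cos:
  fixes L :: real and n m :: nat
  assumes L: "L > 0" and m: "m \<ge> 1"
  shows "integral {-pi*L..pi*L} (\<lambda>x. cos (real n * x / L) * cos (real m * x / L)) = (if n = m then pi * L else 0)"
proof -
  have eq: "(\<lambda>x. cos (real n * x / L) * cos (real m * x / L)) =
     (\<lambda>x. (1/2) * cos (of_int (int n - int m) * x / L) + (1/2) * cos (of_int (int n + int m) * x / L))"
  proof
    fix x
    have a: "real n * x / L - real m * x / L = of_int (int n - int m) * x / L"
         "real n * x / L + real m * x / L = of_int (int n + int m) * x / L"
      by (simp_all add: diff_divide_distrib add_divide_distrib algebra_simps)
    show "cos (real n * x / L) * cos (real m * x / L) = (1/2) * cos (of_int (int n - int m) * x / L) + (1/2) * cos (of_int (int n + int m) * x / L)"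
      unfolding cos_times_cos a by simp
  qed
  have "((\<lambda>x. (1/2) * cos (of_int (int n - int m) * x / L) + (1/2) * cos (of_int (int n + int m) * x / L))
     has_integral ((1/2) * (if int n - int m = 0 then 2 * pi * L else 0) + (1/2) * (if int n + int m = 0 then 2 * pi * L else 0))) {-pi*L..pi*L}"
    by (intro has_integral_add has_integral_mult_right int_cos_int L)
  hence "integral {-pi*L..pi*L} (\<lambda>x. cos (real n * x / L) * cos (real m * x / L)) = 
      (1/2) * (if int n - int m = 0 then 2 * pi * L else 0) + (1/2) * (if int n + int m = 0 then 2 * pi * L else 0)"
    unfolding eq by (rule integral_unique)
  moreover have "int n + int m \<noteq> 0" using m by simp
  moreover have "(int n - int m = 0) = (n = m)" by simp
  ultimately show ?thesis by (simp only: if_False) simp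
qed

lemma int_cos_sin:
  fixes L :: real and n m :: nat
  assumes L: "L > 0"
  shows "integral {-pi*L..pi*L} (\<lambda>x. cos (real n * x / L) * sin (real m * x / L)) = 0"
proof -
  have eq: "(\<lambda>x. cos (real n * x / L) * sin (real m * x / L)) =
     (\<lambda>x. (1/2) * sin (of_int (int n + int m) * x / L) - (1/2) * sin (of_int (int n - int m) * x / L))"
  proof
    fix x
    have a: "real n * x / L - real m * x / L = of_int (int n - int m) * x / L"
         "real n * x / L + real m * x / L = of_int (int n + int m) * x / L"
      by (simp_all add: diff_divide_distrib add_divide_distrib algebra_simps)
    show "cos (real n * x / L) * sin (real m * x / L) = (1/2) * sin (of_int (int n + int m) * x / L) - (1/2) * sin (of_int (int n - int m) * x / L)"
      unfolding cos_times_sin a by simp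
  qed
  have "((\<lambda>x. (1/2) * sin (of_int (int n + int m) * x / L) - (1/2) * sin (of_int (int n - int m) * x / L))
     has_integral ((1/2) * 0 - (1/2) * 0)) {-pi*L..pi*L}"
    by (intro has_integral_diff has_integral_mult_right int_sin_int L)
  thus ?thesis unfolding eq by (simp add: integral_unique)
qed

lemma int_cos_one:
  fixes L :: real and n :: nat
  assumes L: "L > 0"
  shows "integral {-pi*L..pi*L} (\<lambda>x. cos (real n * x / L) * 1) = (if n = 0 then 2 * pi * L else 0)"
  using int_cos_int[OF L, of "int n"] by (simp add: integral_unique)



lemma series_integral:
  fixes L :: real and b :: "nat \<Rightarrow> real" and \<phi> :: "real \<Rightarrow> real"
  assumes L: "L > 0" and sb: "summable (\<lambda>n. \<bar>b n\<bar>)"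
    and c\<phi>: "continuous_on {-pi*L..pi*L} \<phi>" and b\<phi>: "\<And>x. x \<in> {-pi*L..pi*L} \<Longrightarrow> \<bar>\<phi> x\<bar> \<le> 1"
  shows "(\<lambda>n. b n * integral {-pi*L..pi*L} (\<lambda>x. cos (real n * x / L) * \<phi> x)) sums
           integral {-pi*L..pi*L} (\<lambda>x. (\<Sum>n. b n * cos (real n * x / L)) * \<phi> x)"
proof -
  define S where "S = {-pi*L..pi*L}"
  define f where "f k x = (\<Sum>n<k. b n * cos (real n * x / L)) * \<phi> x" for k x
  define B where "B = (\<Sum>n. \<bar>b n\<bar>)"
  have sc: "summable (\<lambda>n. b n * cos (real n * x / L))" for x
  proof (rule summable_comparison_test'[OF sb])
    fix n :: nat
    show "norm (b n * cos (real n * x / L)) \<le> \<bar>b n\<bar>"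
      by (simp add: abs_mult mult_left_le)
  qed
  have ci: "continuous_on S (f k)" for k
    unfolding f_def S_def using L by (intro continuous_intros c\<phi>) auto
  have fi: "f k integrable_on S" for k
    using ci unfolding S_def by (rule integrable_continuous_interval)
  have le: "norm (f k x) \<le> B" if "x \<in> S" for k x
  proof -
    have "\<bar>\<Sum>n<k. b n * cos (real n * x / L)\<bar> \<le> (\<Sum>n<k. \<bar>b n * cos (real n * x / L)\<bar>)"
      by (rule sum_abs)
    also have "... \<le> (\<Sum>n<k. \<bar>b n\<bar>)"
      by (intro sum_mono) (simp add: abs_mult mult_left_le)
    also have "... \<le> B" unfolding B_def by (rule sum_le_suminf[OF sb]) auto
    finally have 1: "\<bar>\<Sum>n<k. b n * cos (real n * x / L)\<bar> \<le> B" .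
    have 2: "\<bar>\<phi> x\<bar> \<le> 1" using b\<phi> that unfolding S_def by blast
    have "norm (f k x) = \<bar>\<Sum>n<k. b n * cos (real n * x / L)\<bar> * \<bar>\<phi> x\<bar>"
      unfolding f_def by (simp add: abs_mult)
    also have "... \<le> B * 1"
      by (rule mult_mono[OF 1 2]) (auto intro: order_trans[OF abs_ge_zero 1])
    finally show ?thesis by simp
  qed
  have conv: "(\<lambda>k. f k x) \<longlonglongrightarrow> (\<Sum>n. b n * cos (real n * x / L)) * \<phi> x" for x
    unfolding f_def by (intro tendsto_mult_right summable_LIMSEQ sc)
  have dc: "(\<lambda>k. integral S (f k)) \<longlonglongrightarrow> integral S (\<lambda>x. (\<Sum>n. b n * cos (real n * x / L)) * \<phi> x)"
    by (rule dominated_convergence(2)[OF fi _ le conv]) (auto simp: S_def)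
  have ik: "integral S (f k) = (\<Sum>n<k. b n * integral S (\<lambda>x. cos (real n * x / L) * \<phi> x))" for k
  proof -
    have "f k = (\<lambda>x. \<Sum>n<k. b n * (cos (real n * x / L) * \<phi> x))"
      unfolding f_def by (simp add: fun_eq_iff sum_distrib_right mult.assoc)
    moreover have "integral S (\<lambda>x. \<Sum>n<k. b n * (cos (real n * x / L) * \<phi> x)) = (\<Sum>n<k. integral S (\<lambda>x. b n * (cos (real n * x / L) * \<phi> x)))"
      using L unfolding S_def
      by (intro integral_sum) (auto intro!: integrable_continuous_interval continuous_intros c\<phi> c\<phi>[simplified])
    ultimately have "integral S (f k) = (\<Sum>n<k. integral S (\<lambda>x. b n * (cos (real n * x / L) * \<phi> x)))"
      by simp
    also have "... = (\<Sum>n<k. b n * integral S (\<lambda>x. cos (real n * x / L) * \<phi> x))"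
      by simp
    finally show ?thesis .
  qed
  show ?thesis unfolding sums_def S_def[symmetric] ik[symmetric] by (rule dc)
qed



lemma cosh_gt1: "(x::real) \<noteq> 0 \<Longrightarrow> 1 < cosh x"
proof -
  assume "x \<noteq> 0"
  hence "cosh 0 < cosh \<bar>x\<bar>" by (intro cosh_real_strict_mono) auto
  moreover have "cosh \<bar>x\<bar> = cosh x" by simp
  ultimately show ?thesis by simp
qed

lemma Gy1_closed:
  fixes L x :: real
  assumes L: "L > 0"
  shows "Gy1 L x = sinh (1/L) / (2 * pi * L * (cosh (1/L) - cos (x/L)))"
proof -
  have C: "cosh (1/L) - cos (x/L) > 0"
  proof -
    have "cos(x/L) \<le> 1" by simp
    moreover have "1 < cosh(1/L)" using L by (intro cosh_gt1) simp
    ultimately show ?thesis by linarith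
  qed
  have cm: "cosh ((1 - 2)/L) = cosh (1/L)" "sinh ((1 - 2)/L) = - sinh (1/L)"
    by (simp_all add: minus_divide_left[symmetric])
  define K where "K = cos (x/L) - cosh (1/L)"
  have K: "K < 0" using C unfolding K_def by simp
  have dA: "((\<lambda>y. cos (x/L) - cosh (y/L)) has_real_derivative (- (sinh (1/L) / L))) (at 1)"
    apply (rule derivative_eq_intros refl)+
    using L by (simp_all, (simp_all add: field_simps)?)
  have dB: "((\<lambda>y. cos (x/L) - cosh ((y - 2)/L)) has_real_derivative (- (sinh ((1 - 2)/L) / L))) (at 1)"
    apply (rule derivative_eq_intros refl)+
    using L by (simp_all, (simp_all add: field_simps)?)
  have dQ: "((\<lambda>y. (cos (x/L) - cosh (y/L)) / (cos (x/L) - cosh ((y - 2)/L))) has_real_derivative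
       ((- (sinh (1/L) / L)) * K - K * (- (sinh ((1 - 2)/L) / L))) / (K * K)) (at 1)"
    using DERIV_divide[OF dA dB] K unfolding K_def cm by simp
  have q1: "(cos (x/L) - cosh (1/L)) / (cos (x/L) - cosh ((1 - 2)/L)) = 1"
    using K unfolding K_def cm by simp
  have dL: "((\<lambda>y. ln ((cos (x/L) - cosh (y/L)) / (cos (x/L) - cosh ((y - 2)/L)))) has_real_derivative
       inverse 1 * (((- (sinh (1/L) / L)) * K - K * (- (sinh ((1 - 2)/L) / L))) / (K * K))) (at 1)"
    by (rule DERIV_chain2[OF _ dQ]) (use q1 DERIV_ln[of 1] in simp)
  have "((\<lambda>y. Gfun L x y) has_real_derivative (1 / (4 * pi)) * (inverse 1 * (((- (sinh (1/L) / L)) * K - K * (- (sinh ((1 - 2)/L) / L))) / (K * K)))) (at 1)"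
    unfolding Gfun_def by (rule DERIV_cmult[OF dL])
  moreover have "(1 / (4 * pi)) * (inverse 1 * (((- (sinh (1/L) / L)) * K - K * (- (sinh ((1 - 2)/L) / L))) / (K * K)))
     = sinh (1/L) / (2 * pi * L * (cosh (1/L) - cos (x/L)))"
  proof -
    have e: "cosh (1/L) - cos (x/L) = - K" unfolding K_def by simp
    show ?thesis unfolding cm e using K L by (simp add: field_simps)
  qed
  ultimately have "((\<lambda>y. Gfun L x y) has_real_derivative sinh (1/L) / (2 * pi * L * (cosh (1/L) - cos (x/L)))) (at 1)"
    by simp
  then show ?thesis unfolding Gy1_def by (rule DERIV_imp_deriv)
qed



lemma chi_closed:
  fixes L x :: real
  assumes L: "L > 0"
  shows "chi_fun L (- (1 / (4 * pi * L)) * (cosh (1 / L) / sinh (1 / L))) x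
     = (cosh (1/L) * cos (x/L) - 1) / (8 * pi^2 * L^2 * (cosh (1/L) - cos (x/L))^2)"
proof -
  have C: "cosh (1/L) - cos (x/L) > 0"
  proof -
    have "cos(x/L) \<le> 1" by simp
    moreover have "1 < cosh(1/L)" using L by (intro cosh_gt1) simp
    ultimately show ?thesis by linarith
  qed
  have s: "sinh (1/L) > 0" using L by simp
  have id: "cosh (1/L)^2 = sinh (1/L)^2 + 1" by (rule cosh_square_eq)
  define D where "D = cosh (1/L) - cos (x/L)"
  have D: "D > 0" using C unfolding D_def .
  have cc: "cos (x/L) = cosh (1/L) - D" unfolding D_def by simp
  show ?thesis
    unfolding chi_fun_def Gy1_closed[OF L] D_def[symmetric] cc
    using D s L id
    by (simp add: field_simps power2_eq_square)
qed

definition bco :: "real \<Rightarrow> nat \<Rightarrow> real" where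
  "bco L n = real n * exp (-1/L) ^ n / (4 * pi^2 * L^2)"

lemma bco_summable: "L > 0 \<Longrightarrow> summable (\<lambda>n. \<bar>bco L n\<bar>)"
proof -
  assume L: "L > 0"
  have "(\<lambda>n. real n * exp (-(1/L)) ^ n * cos (real n * 0)) sums
           ((cosh (1/L) * cos 0 - 1) / (2 * (cosh (1/L) - cos 0)^2))"
    by (rule kernel_sums) (use L in simp)
  hence "summable (\<lambda>n. real n * exp (-1/L) ^ n)" by (simp add: sums_iff)
  hence "summable (\<lambda>n. real n * exp (-1/L) ^ n / (4 * pi^2 * L^2))" by (rule summable_divide)
  moreover have "\<bar>bco L n\<bar> = real n * exp (-1/L) ^ n / (4 * pi^2 * L^2)" for n
    unfolding bco_def by simp
  ultimately show ?thesis by simp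
qed

lemma chi_series:
  fixes L x :: real
  assumes L: "L > 0"
  shows "chi_fun L (- (1 / (4 * pi * L)) * (cosh (1 / L) / sinh (1 / L))) x
     = (\<Sum>n. bco L n * cos (real n * x / L))"
proof -
  have "(\<lambda>n. real n * exp (-(1/L)) ^ n * cos (real n * (x/L))) sums
           ((cosh (1/L) * cos (x/L) - 1) / (2 * (cosh (1/L) - cos (x/L))^2))"
    by (rule kernel_sums) (use L in simp)
  hence "(\<lambda>n. (real n * exp (-(1/L)) ^ n * cos (real n * (x/L))) / (4 * pi^2 * L^2)) sums
           ((cosh (1/L) * cos (x/L) - 1) / (2 * (cosh (1/L) - cos (x/L))^2) / (4 * pi^2 * L^2))"
    by (rule sums_divide)
  moreover have "(\<lambda>n. (real n * exp (-(1/L)) ^ n * cos (real n * (x/L))) / (4 * pi^2 * L^2)) = (\<lambda>n. bco L n * cos (real n * x / L))"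
    unfolding bco_def by (simp add: fun_eq_iff)
  moreover have "(cosh (1/L) * cos (x/L) - 1) / (2 * (cosh (1/L) - cos (x/L))^2) / (4 * pi^2 * L^2)
      = chi_fun L (- (1 / (4 * pi * L)) * (cosh (1 / L) / sinh (1 / L))) x"
    unfolding chi_closed[OF L] by (simp add: field_simps)
  ultimately show ?thesis by (simp add: sums_iff)
qed



lemma eta_formula:
  fixes L g \<alpha> x :: real
  assumes L: "L > 0" and g: "g > 0" and a: "\<alpha>\<^sup>2 > 0"
  shows "eta_star L g \<alpha> (- (1 / (4 * pi * L)) * (cosh (1 / L) / sinh (1 / L))) x =
          - (1 / (4 * pi\<^sup>2)) *
            (\<Sum>n. real (Suc n) / (g * L\<^sup>2 + \<alpha>\<^sup>2 * (real (Suc n))\<^sup>2)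
                   * exp (- real (Suc n) / L) * cos (real (Suc n) * x / L))"
proof -
  define c1 where "c1 = - (1 / (4 * pi * L)) * (cosh (1 / L) / sinh (1 / L))"
  define S where "S = {-pi*L..pi*L}"
  define chi where "chi = (\<lambda>x. (\<Sum>n. bco L n * cos (real n * x / L)))"
  have chi: "chi_fun L c1 = chi" unfolding chi_def c1_def using chi_series[OF L] by (simp add: fun_eq_iff)
  have sb: "summable (\<lambda>n. \<bar>bco L n\<bar>)" using bco_summable[OF L] .
  have b0: "bco L 0 = 0" unfolding bco_def by simp
  have "(\<lambda>n. bco L n * integral S (\<lambda>x. cos (real n * x / L) * 1)) sums integral S (\<lambda>x. chi x * 1)"
    unfolding S_def chi_def by (rule series_integral[OF L sb]) (auto intro: continuous_intros)
  moreover have "(\<lambda>n. bco L n * integral S (\<lambda>x. cos (real n * x / L) * 1)) = (\<lambda>n. 0)"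
    unfolding S_def int_cos_one[OF L] using b0 by (auto simp: fun_eq_iff)
  ultimately have "integral S chi = 0" by (simp add: sums_iff)
  hence fun_eq: "(\<lambda>t. chi_fun L c1 t - 1 / (2 * pi * L) * integral {-pi*L..pi*L} (chi_fun L c1)) = chi"
    unfolding chi S_def by simp
  have cc: "cos_coeff L chi m = bco L m" if m: "m \<ge> 1" for m
  proof -
    have "(\<lambda>n. bco L n * integral S (\<lambda>x. cos (real n * x / L) * cos (real m * x / L))) sums integral S (\<lambda>x. chi x * cos (real m * x / L))"
      unfolding S_def chi_def by (rule series_integral[OF L sb]) (use L in \<open>auto intro!: continuous_intros\<close>)
    moreover have "(\<lambda>n. bco L n * integral S (\<lambda>x. cos (real n * x / L) * cos (real m * x / L))) = (\<lambda>n. if n = m then bco L m * (pi * L) else 0)"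
      unfolding S_def int_cos_cos[OF L m] by (auto simp: fun_eq_iff)
    ultimately have "integral S (\<lambda>x. chi x * cos (real m * x / L)) = bco L m * (pi * L)"
      using sums_single[of m "\<lambda>_. bco L m * (pi * L)"] by (simp add: sums_iff)
    thus ?thesis unfolding cos_coeff_def S_def using L by simp
  qed
  have sc: "sin_coeff L chi m = 0" for m
  proof -
    have "(\<lambda>n. bco L n * integral S (\<lambda>x. cos (real n * x / L) * sin (real m * x / L))) sums integral S (\<lambda>x. chi x * sin (real m * x / L))"
      unfolding S_def chi_def by (rule series_integral[OF L sb]) (use L in \<open>auto intro!: continuous_intros\<close>)
    moreover have "(\<lambda>n. bco L n * integral S (\<lambda>x. cos (real n * x / L) * sin (real m * x / L))) = (\<lambda>n. 0)"
      unfolding S_def int_cos_sin[OF L] by (auto simp: fun_eq_iff)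
    ultimately have "integral S (\<lambda>x. chi x * sin (real m * x / L)) = 0"
      by (simp add: sums_iff)
    thus ?thesis unfolding sin_coeff_def S_def by simp
  qed
  define T where "T n = real n / (g * L\<^sup>2 + \<alpha>\<^sup>2 * (real n)\<^sup>2) * exp (- real n / L) * cos (real n * x / L)" for n
  have pos: "g * L\<^sup>2 + \<alpha>\<^sup>2 * (real n)\<^sup>2 > 0" for n
    using g L a by (intro add_pos_nonneg) auto
  have tm: "(if n = 0 then 0 else
        (cos_coeff L chi n * cos (real n * x / L) + sin_coeff L chi n * sin (real n * x / L))
        / (g + \<alpha>\<^sup>2 * (real n)\<^sup>2 / L\<^sup>2)) = 1 / (4 * pi\<^sup>2) * T n" for n
  proof (cases "n = 0")
    case True then show ?thesis unfolding T_def by simp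
  next
    case False
    have e: "exp (- real n / L) = exp (-1/L) ^ n"
      by (simp add: exp_of_nat_mult[symmetric])
    have p: "g * L\<^sup>2 + \<alpha>\<^sup>2 * (real n)\<^sup>2 > 0" by (rule pos)
    have ccn: "cos_coeff L chi n = bco L n" using False by (intro cc) simp
    show ?thesis using False L p
      unfolding ccn sc T_def bco_def e
      by (simp add: field_simps)
  qed
  have sT: "summable T"
  proof (rule summable_comparison_test')
    show "summable (\<lambda>n. real n * exp (-1/L) ^ n / (4 * pi^2 * L^2) * (4 * pi^2 / g))"
      using bco_summable[OF L] unfolding bco_def by (intro summable_mult2) simp
    fix n :: nat
    have e: "exp (- real n / L) = exp (-1/L) ^ n"
      by (simp add: exp_of_nat_mult[symmetric])
    have p: "g * L\<^sup>2 \<le> g * L\<^sup>2 + \<alpha>\<^sup>2 * (real n)\<^sup>2" by simp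
    have "norm (T n) \<le> real n / (g * L\<^sup>2 + \<alpha>\<^sup>2 * (real n)\<^sup>2) * exp (- real n / L)"
    proof -
      have "norm (T n) = (real n / (g * L\<^sup>2 + \<alpha>\<^sup>2 * (real n)\<^sup>2) * exp (- real n / L)) * \<bar>cos (real n * x / L)\<bar>"
        unfolding T_def using pos[of n] by (simp add: abs_mult)
      also have "... \<le> (real n / (g * L\<^sup>2 + \<alpha>\<^sup>2 * (real n)\<^sup>2) * exp (- real n / L)) * 1"
        using pos[of n] by (intro mult_left_mono) auto
      finally show ?thesis by simp
    qed
    also have "... \<le> real n / (g * L\<^sup>2) * exp (- real n / L)"
      using g L p pos[of n] by (intro mult_right_mono divide_left_mono) auto
    also have "... = real n * exp (-1/L) ^ n / (4 * pi^2 * L^2) * (4 * pi^2 / g)"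
      unfolding e using g L by (simp add: field_simps)
    finally show "norm (T n) \<le> real n * exp (-1/L) ^ n / (4 * pi^2 * L^2) * (4 * pi^2 / g)" .
  qed
  have "eta_star L g \<alpha> c1 x = - (\<Sum>n. 1 / (4 * pi\<^sup>2) * T n)"
    unfolding eta_star_def fun_eq inv_op_def tm ..
  also have "... = - (1 / (4 * pi\<^sup>2) * (\<Sum>n. T n))"
    using suminf_mult[OF sT, of "1 / (4 * pi\<^sup>2)"] by (simp only:)
  also have "(\<Sum>n. T n) = (\<Sum>n. T (Suc n))"
    using suminf_split_head[OF sT] unfolding T_def by simp
  finally show ?thesis unfolding c1_def T_def by simp
qed



lemma coth_double: "(a::real) \<noteq> 0 \<Longrightarrow> sinh (2*a) / (cosh (2*a) - 1) = cosh a / sinh a"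
proof -
  assume a: "a \<noteq> 0"
  have s: "sinh a \<noteq> 0" using a by simp
  have "cosh (2*a) - 1 = 2 * sinh a ^ 2" using cosh_double[of a] cosh_square_eq[of a] by simp
  thus ?thesis using s by (simp add: sinh_double power2_eq_square)
qed

lemma reg_deriv:
  fixes L :: real and H :: "real \<times> real \<Rightarrow> real"
  assumes L: "L > 0" and R: "is_regular_part L H"
  shows "perp_grad_first H = - (1 / (4 * pi * L)) * (cosh (1 / L) / sinh (1 / L))"
proof -
  from R have dH: "H differentiable (at (0,0))" and
    "\<exists>e>0. \<forall>p. 0 < norm p \<and> norm p < e \<longrightarrow> H p = Gfun L (fst p) (snd p) - Gamma_fun (fst p) (snd p)"
    unfolding is_regular_part_def by auto
  then obtain e where e: "e > 0" and eq: "\<And>p. 0 < norm p \<Longrightarrow> norm p < e \<Longrightarrow> H p = Gfun L (fst p) (snd p) - Gamma_fun (fst p) (snd p)"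
    by blast
  define e' where "e' = min e 1"
  have e': "e' > 0" "e' \<le> 1" "e' \<le> e" unfolding e'_def using e by auto
  have "(\<lambda>y::real. (0::real, y)) differentiable (at 0)"
  proof (rule differentiableI)
    show "((\<lambda>y::real. (0::real, y)) has_derivative (\<lambda>h. (0, h))) (at 0)"
      by (intro has_derivative_Pair has_derivative_const has_derivative_ident)
  qed
  hence "(\<lambda>y. H (0, y)) differentiable (at 0)"
    using differentiable_compose[of H "\<lambda>y. (0, y)" 0 UNIV] dH by simp
  hence dh: "DERIV (\<lambda>y. H (0, y)) 0 :> deriv (\<lambda>y. H (0, y)) 0"
    using DERIV_deriv_iff_real_differentiable by blast
  define d where "d = deriv (\<lambda>y. H (0, y)) 0"
  define \<psi> where "\<psi> y = 1 / (4 * pi) * ln (cosh ((y - 2) / L) - 1)" for y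
  define \<psi>' where "\<psi>' = 1 / (4 * pi) * (1 / (cosh ((0 - 2)/L) - 1) * (sinh ((0 - 2)/L) * (1/L)))"
  have c2: "cosh ((0 - 2)/L) - 1 > 0" using cosh_gt1[of "(0-2)/L"] L by simp
  have d\<psi>: "DERIV \<psi> 0 :> \<psi>'"
  proof -
    have inner: "DERIV (\<lambda>y. cosh ((y - 2) / L) - 1) 0 :> sinh ((0 - 2)/L) * (1/L)"
      apply (rule derivative_eq_intros refl)+
      using L by (simp_all, (simp_all add: field_simps)?)
    show ?thesis unfolding \<psi>_def \<psi>'_def
      by (rule DERIV_cmult, rule DERIV_chain2[OF DERIV_ln_divide[OF c2] inner])
  qed
  define \<phi> where "\<phi> y = H (0, y) + \<psi> y" for y
  have d\<phi>: "DERIV \<phi> 0 :> d + \<psi>'"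
    unfolding \<phi>_def d_def by (rule DERIV_add[OF dh d\<psi>])
  have ev: "\<phi> (-y) = \<phi> y" if y: "\<bar>y\<bar> < e'" for y
  proof (cases "y = 0")
    case True then show ?thesis by simp
  next
    case False
    have form: "\<phi> t = 1 / (4 * pi) * (ln (cosh (t / L) - 1) - ln (t\<^sup>2))" if t: "t \<noteq> 0" "\<bar>t\<bar> < e'" for t
    proof -
      have n: "norm (0::real, t) = \<bar>t\<bar>" by (simp add: norm_Pair)
      have Ht: "H (0, t) = Gfun L 0 t - Gamma_fun 0 t"
        using eq[of "(0,t)"] t e' n by auto
      have A: "cosh (t / L) - 1 > 0" using cosh_gt1[of "t/L"] t L by simp
      have t2: "t - 2 \<noteq> 0" using t e' by linarith
      have B: "cosh ((t - 2) / L) - 1 > 0" using cosh_gt1[of "(t-2)/L"] t2 L by simp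
      have "(1 - cosh (t / L)) / (1 - cosh ((t - 2) / L)) = (- (cosh (t / L) - 1)) / (- (cosh ((t - 2) / L) - 1))"
        by simp
      also have "... = (cosh (t / L) - 1) / (cosh ((t - 2) / L) - 1)"
        by (rule minus_divide_divide)
      finally have fr: "(1 - cosh (t / L)) / (1 - cosh ((t - 2) / L)) = (cosh (t / L) - 1) / (cosh ((t - 2) / L) - 1)" .
      have "ln ((1 - cosh (t / L)) / (1 - cosh ((t - 2) / L))) = ln (cosh (t / L) - 1) - ln (cosh ((t - 2) / L) - 1)"
        unfolding fr ln_div by (rule if_P) (use A B in linarith)
      thus ?thesis unfolding \<phi>_def Ht Gfun_def Gamma_fun_def \<psi>_def by (simp add: field_simps)
    qed
    show ?thesis using form[of y] form[of "-y"] False y by simp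
  qed
  have "DERIV (\<lambda>y. \<phi> (-y)) 0 :> (d + \<psi>') * (-1)"
    by (rule DERIV_chain2[where f = \<phi>, OF _ DERIV_minus[OF DERIV_ident]]) (use d\<phi> in simp)
  hence "DERIV \<phi> 0 :> (d + \<psi>') * (-1)"
    by (rule has_field_derivative_transform_within[OF _ e'(1)]) (use ev in \<open>auto simp: dist_real_def\<close>)
  hence "d + \<psi>' = (d + \<psi>') * (-1)" using d\<phi> DERIV_unique by blast
  hence "d = - \<psi>'" by simp
  moreover have "\<psi>' = - (1 / (4 * pi * L)) * (cosh (1 / L) / sinh (1 / L))"
  proof -
    have "sinh ((0 - 2)/L) = - sinh (2 * (1/L))" "cosh ((0 - 2)/L) = cosh (2 * (1/L))"
      by (simp_all add: minus_divide_left[symmetric])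
    hence pe: "\<psi>' = - (1 / (4 * pi * L)) * (sinh (2 * (1/L)) / (cosh (2 * (1/L)) - 1))"
      unfolding \<psi>'_def by (simp add: field_simps)
    have cd: "sinh (2 * (1/L)) / (cosh (2 * (1/L)) - 1) = cosh (1/L) / sinh (1/L)"
      using L by (intro coth_double) simp
    show ?thesis unfolding pe cd ..
  qed
  ultimately show ?thesis unfolding perp_grad_first_def d_def by simp
qed



lemma rdiff: "DERIV (f::real \<Rightarrow> real) t :> D \<Longrightarrow> f differentiable (at t)"
  unfolding differentiable_def has_field_derivative_def by blast

lemma norm_sin_Complex: "(cmod (sin (Complex u v)))\<^sup>2 = (sin u)\<^sup>2 + (sinh v)\<^sup>2"
proof -
  have r: "Re (sin (Complex u v)) = sin u * cosh v" unfolding Re_sin cosh_def by simp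
  have i: "Im (sin (Complex u v)) = cos u * sinh v" unfolding Im_sin sinh_def by simp
  have "(cmod (sin (Complex u v)))\<^sup>2 = (sin u * cosh v)\<^sup>2 + (cos u * sinh v)\<^sup>2"
    unfolding cmod_power2 r i ..
  also have "... = (sin u)\<^sup>2 * (cosh v)\<^sup>2 + (cos u)\<^sup>2 * (sinh v)\<^sup>2"
    by (simp add: power_mult_distrib)
  also have "... = (sin u)\<^sup>2 + (sinh v)\<^sup>2"
    by (simp only: cosh_square_eq cos_squared_eq) (simp add: algebra_simps)
  finally show ?thesis .
qed

lemma cosh_cos_sin: fixes x y L :: real shows "cosh (y / L) - cos (x / L) = 2 * ((sin (x / (2*L)))\<^sup>2 + (sinh (y / (2*L)))\<^sup>2)"
proof -
  have "cos (x / L) = cos (2 * (x / (2*L)))" by simp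
  also have "... = 1 - 2 * (sin (x / (2*L)))\<^sup>2" by (rule cos_double_sin)
  finally have c: "cos (x / L) = 1 - 2 * (sin (x / (2*L)))\<^sup>2" .
  have "cosh (y / L) = cosh (2 * (y / (2*L)))" by simp
  also have "... = 1 + 2 * (sinh (y / (2*L)))\<^sup>2" using cosh_double[of "y/(2*L)"] cosh_square_eq[of "y/(2*L)"] by simp
  finally have ch: "cosh (y / L) = 1 + 2 * (sinh (y / (2*L)))\<^sup>2" .
  show ?thesis unfolding c ch by simp
qed

lemma reg_exists:
  fixes L :: real
  assumes L: "L > 0"
  shows "\<exists>H. is_regular_part L H"
proof -
  define f where "f = (\<lambda>z::complex. sin (z / (2 * complex_of_real L)))"
  define hz where "hz = (\<lambda>z. if z = 0 then deriv f 0 else (f z - f 0) / (z - 0))"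
  define cz where "cz = (\<lambda>p::real \<times> real. Complex (fst p) (snd p))"
  define H0 where "H0 = (\<lambda>p. 1 / (4 * pi) * (ln (2 * (norm (hz (cz p)))\<^sup>2) - ln (cosh ((snd p - 2) / L) - cos (fst p / L))))"
  have holo: "hz holomorphic_on UNIV"
    unfolding hz_def by (rule pole_lemma) (auto simp: f_def intro!: holomorphic_intros)
  have df: "DERIV f 0 :> cos (0 / (2 * complex_of_real L)) * (1 / (2 * complex_of_real L))"
    unfolding f_def
    apply (rule derivative_eq_intros refl)+
    using L by (simp_all, (simp_all add: field_simps)?)
  have h0: "hz 0 = 1 / (2 * complex_of_real L)"
    unfolding hz_def using DERIV_imp_deriv[OF df] by simp
  have h0nz: "hz 0 \<noteq> 0" using h0 L by simp
  have cz0: "cz (0, 0) = 0" unfolding cz_def by (simp add: complex_eq_iff)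
  have blcz: "bounded_linear cz"
  proof (rule bounded_linear_intro[where K = 1])
    show "cz (x + y) = cz x + cz y" for x y unfolding cz_def by (simp add: complex_eq_iff)
    show "cz (r *\<^sub>R x) = r *\<^sub>R cz x" for r x unfolding cz_def by (simp add: complex_eq_iff)
    show "norm (cz x) \<le> norm x * 1" for x
      unfolding cz_def by (cases x) (simp add: cmod_def norm_Pair)
  qed
  have d1: "(\<lambda>p. hz (cz p)) differentiable (at (0,0))"
  proof (rule differentiable_compose[of hz cz])
    show "hz differentiable (at (cz (0, 0)))"
      unfolding cz0 using holo
      by (intro field_differentiable_imp_differentiable holomorphic_on_imp_differentiable_at) auto
    show "cz differentiable (at (0, 0))" by (rule bounded_linear_imp_differentiable[OF blcz])
  qed
  have d2: "(\<lambda>p. norm (hz (cz p))) differentiable (at (0,0))"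
    by (rule differentiable_compose[where f = norm and g = "\<lambda>p. hz (cz p)" and x = "(0,0)", OF _ d1]) (simp add: cz0 h0nz)
  have pos1: "2 * (norm (hz (cz (0,0))))\<^sup>2 > 0" using h0nz cz0 by simp
  have d3: "(\<lambda>p. ln (2 * (norm (hz (cz p)))\<^sup>2)) differentiable (at (0,0))"
    by (rule differentiable_compose[where f = ln and g = "\<lambda>p. 2 * (norm (hz (cz p)))\<^sup>2" and x = "(0,0)", OF rdiff[OF DERIV_ln_divide[OF pos1]]])
       (intro differentiable_mult differentiable_const differentiable_power d2)
  have dfst: "(\<lambda>p::real\<times>real. fst p) differentiable (at (0,0))"
    by (rule bounded_linear_imp_differentiable[OF bounded_linear_fst])
  have dsnd: "(\<lambda>p::real\<times>real. snd p) differentiable (at (0,0))"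
    by (rule bounded_linear_imp_differentiable[OF bounded_linear_snd])
  have dcos: "(\<lambda>p::real\<times>real. cos (fst p / L)) differentiable (at (0,0))"
    by (rule differentiable_compose[where f = cos and g = "\<lambda>p. fst p / L" and x = "(0::real,0::real)", OF rdiff[OF DERIV_cos]])
       (intro differentiable_divide differentiable_const dfst, use L in simp)
  have dcosh: "(\<lambda>p::real\<times>real. cosh ((snd p - 2) / L)) differentiable (at (0,0))"
    by (rule differentiable_compose[where f = cosh and g = "\<lambda>p. (snd p - 2) / L" and x = "(0::real,0::real)", OF rdiff[OF has_field_derivative_cosh[OF DERIV_ident]]])
       (intro differentiable_divide differentiable_diff differentiable_const dsnd, use L in simp)
  have pos2: "cosh ((snd (0::real,0::real) - 2) / L) - cos (fst (0::real,0::real) / L) > 0"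
    using cosh_gt1[of "(0-2)/L"] L by simp
  have d4: "(\<lambda>p. ln (cosh ((snd p - 2) / L) - cos (fst p / L))) differentiable (at (0,0))"
    by (rule differentiable_compose[where f = ln and g = "\<lambda>p. cosh ((snd p - 2) / L) - cos (fst p / L)" and x = "(0::real,0::real)", OF rdiff[OF DERIV_ln_divide[OF pos2]]])
       (intro differentiable_diff dcosh dcos)
  have dH: "H0 differentiable (at (0,0))"
    unfolding H0_def by (intro differentiable_mult differentiable_const differentiable_diff d3 d4)
  have eqH: "H0 p = Gfun L (fst p) (snd p) - Gamma_fun (fst p) (snd p)"
    if p: "0 < norm p" "norm p < min 1 (pi * L)" for p
  proof -
    obtain x y where xy: "p = (x, y)" by (cases p)
    have nxy: "norm p = sqrt (x\<^sup>2 + y\<^sup>2)" unfolding xy by (simp add: norm_Pair)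
    have r: "x\<^sup>2 + y\<^sup>2 > 0" using p(1) nxy by simp
    have z: "cz p \<noteq> 0" using r unfolding xy cz_def by (auto simp: complex_eq_iff)
    have ax: "\<bar>x\<bar> < pi * L" and ay: "\<bar>y\<bar> < 1"
    proof -
      have "\<bar>x\<bar> \<le> norm p" "\<bar>y\<bar> \<le> norm p" unfolding nxy by (simp_all add: real_le_rsqrt)
      thus "\<bar>x\<bar> < pi * L" "\<bar>y\<bar> < 1" using p by auto
    qed
    define A where "A = cosh (y / L) - cos (x / L)"
    define B where "B = cosh ((y - 2) / L) - cos (x / L)"
    have hzv: "hz (cz p) = sin (cz p / (2 * complex_of_real L)) / cz p"
      unfolding hz_def f_def using z by simp
    have arg: "cz p / (2 * complex_of_real L) = Complex (x / (2*L)) (y / (2*L))"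
      unfolding xy cz_def using L by (simp add: complex_eq_iff Re_divide Im_divide power2_eq_square field_simps)
    have ncz: "(cmod (cz p))\<^sup>2 = x\<^sup>2 + y\<^sup>2" unfolding xy cz_def cmod_power2 by simp
    have hzn: "2 * (norm (hz (cz p)))\<^sup>2 = A / (x\<^sup>2 + y\<^sup>2)"
      unfolding hzv norm_divide power_divide arg norm_sin_Complex ncz A_def cosh_cos_sin by simp
    have Apos: "A > 0"
    proof (cases "y = 0")
      case False
      have "sinh (y / (2*L)) \<noteq> 0" using False L by simp
      hence "(sinh (y / (2*L)))\<^sup>2 > 0" by simp
      thus ?thesis unfolding A_def cosh_cos_sin by (simp add: add_nonneg_pos)
    next
      case True
      hence x0: "x \<noteq> 0" using r by auto
      have "sin (\<bar>x\<bar> / (2*L)) > 0"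
        using x0 ax L by (intro sin_gt_zero) (auto simp: field_simps)
      moreover have "(sin (x / (2*L)))\<^sup>2 = (sin (\<bar>x\<bar> / (2*L)))\<^sup>2"
        by (cases "x \<ge> 0") (auto simp: minus_divide_left[symmetric])
      ultimately have "(sin (x / (2*L)))\<^sup>2 > 0" by simp
      thus ?thesis unfolding A_def cosh_cos_sin by (simp add: add_pos_nonneg)
    qed
    have Bpos: "B > 0"
    proof -
      have "y - 2 \<noteq> 0" using ay by linarith
      hence "1 < cosh ((y - 2) / L)" using L by (intro cosh_gt1) simp
      moreover have "cos (x / L) \<le> 1" by simp
      ultimately show ?thesis unfolding B_def by linarith
    qed
    have G: "Gfun L x y = 1 / (4 * pi) * (ln A - ln B)"
    proof -
      have "(cos (x / L) - cosh (y / L)) / (cos (x / L) - cosh ((y - 2) / L)) = (- A) / (- B)"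
        unfolding A_def B_def by simp
      also have "... = A / B" by (rule minus_divide_divide)
      finally have fr: "(cos (x / L) - cosh (y / L)) / (cos (x / L) - cosh ((y - 2) / L)) = A / B" .
      have lab: "ln (A / B) = ln A - ln B" unfolding ln_div using Apos Bpos by (intro if_P) auto
      show ?thesis unfolding Gfun_def fr lab ..
    qed
    have H: "H0 p = 1 / (4 * pi) * (ln A - ln (x\<^sup>2 + y\<^sup>2) - ln B)"
    proof -
      have H0p: "H0 p = 1 / (4 * pi) * (ln (A / (x\<^sup>2 + y\<^sup>2)) - ln B)"
        unfolding H0_def hzn by (simp add: xy B_def)
      have "ln (A / (x\<^sup>2 + y\<^sup>2)) = ln A - ln (x\<^sup>2 + y\<^sup>2)"
        unfolding ln_div using Apos r by (intro if_P) auto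
      thus ?thesis unfolding H0p by simp
    qed
    have "Gfun L (fst p) (snd p) - Gamma_fun (fst p) (snd p) = Gfun L x y - Gamma_fun x y"
      unfolding xy by simp
    also have "... = 1 / (4 * pi) * (ln A - ln B) - 1 / (4 * pi) * ln (x\<^sup>2 + y\<^sup>2)"
      unfolding G Gamma_fun_def ..
    also have "... = H0 p" unfolding H by (simp add: field_simps)
    finally show ?thesis ..
  qed
  have "is_regular_part L H0"
    unfolding is_regular_part_def
  proof (intro conjI dH exI[of _ "min 1 (pi * L)"] allI impI)
    show "0 < min 1 (pi * L)" using L by simp
  qed (use eqH in auto)
  thus ?thesis by blast
qed


theorem proposition6p2:
  fixes L g \<alpha> :: real
  assumes "L > 0" and "g > 0" and "\<alpha>\<^sup>2 > 0"
  shows "(\<exists>H. is_regular_part L H) \<and>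
    (\<forall>H. is_regular_part L H \<longrightarrow>
       perp_grad_first H = - (1 / (4 * pi * L)) * (cosh (1 / L) / sinh (1 / L)) \<and>
       (\<forall>x. eta_star L g \<alpha> (perp_grad_first H) x =
          - (1 / (4 * pi\<^sup>2)) *
            (\<Sum>n. real (Suc n) / (g * L\<^sup>2 + \<alpha>\<^sup>2 * (real (Suc n))\<^sup>2)
                   * exp (- real (Suc n) / L) * cos (real (Suc n) * x / L))))"
proof -
  have "\<exists>H. is_regular_part L H" by (rule reg_exists[OF assms(1)])
  moreover have "\<forall>H. is_regular_part L H \<longrightarrow>
       perp_grad_first H = - (1 / (4 * pi * L)) * (cosh (1 / L) / sinh (1 / L)) \<and>
       (\<forall>x. eta_star L g \<alpha> (perp_grad_first H) x =
          - (1 / (4 * pi\<^sup>2)) *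
            (\<Sum>n. real (Suc n) / (g * L\<^sup>2 + \<alpha>\<^sup>2 * (real (Suc n))\<^sup>2)
                   * exp (- real (Suc n) / L) * cos (real (Suc n) * x / L)))"
    using reg_deriv[OF assms(1)] eta_formula[OF assms] by auto
  ultimately show ?thesis by blast
qed

end
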